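(* Let $(A,B)$ be a $B$-irreducible odd-symmetric non-simple associative superalgebra such that $A_{\bar{0}}$ is a semi-simple associative algebra. Then $A\cong S\oplus P(S^* )$ is the semi-direct product of a simple associative algebra $S$ by $P(S^* )$ by means of $(L^*,R^* )$.
   Context: $\mathbb{K}$ algebraically closed of characteristic zero; finite dimensional associative superalgebras $A=A_{\bar{0}}\oplus A_{\bar{1}}$. An odd-symmetric structure is an odd (i.e. $B(A_{\bar{0}},A_{\bar{0}})=B(A_{\bar{1}},A_{\bar{1}})=\{0\}$), supersymmetric, associative ($B(xy,z)=B(x,yz)$), non-degenerate bilinear form $B$. $(A,B)$ is $B$-irreducible if $A$ contains no non-degenerate graded two-sided ideal other than $\{0\}$ and $A$. For an associative algebra $S$, $P(S^* )$ is the graded space with $P(S^* )_{\bar{0}}=\{0\}$, $P(S^* )_{\bar{1}}=S^*$; the semi-direct product $S\oplus P(S^* )$ has product $(x+f)(y+h)=xy+h\circ R_x+f\circ L_y$ ($L,R$ left/right multiplications in $S$, i.e. $L^*(x)(h)=h\circ R_x$, $R^*(y)(f)=f\circ L_y$) and odd-symmetric form $\widetilde{B}(f,x)=\widetilde{B}(x,f)=f(x)$, $\widetilde{B}(S,S)=\widetilde{B}(P(S^* ),P(S^* ))=\{0\}$. *)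

theory Defs
  imports "HOL-Computational_Algebra.Polynomial"
begin

text \<open>Ground field: algebraically closed, characteristic zero (the type class field_char_0
plus the explicit closure condition below).\<close>
definition alg_closed :: "'k::field itself \<Rightarrow> bool" where
  "alg_closed _ \<longleftrightarrow> (\<forall>p :: 'k poly. degree p \<ge> 1 \<longrightarrow> (\<exists>x. poly p x = 0))"

definition fin_dim_vs :: "('k::field \<Rightarrow> 'a::ab_group_add \<Rightarrow> 'a) \<Rightarrow> bool" where
  "fin_dim_vs sc \<longleftrightarrow> vector_space sc \<and> (\<exists>G. finite G \<and> module.span sc G = UNIV)"

definition bilinear_on :: "('k::field \<Rightarrow> 'a::ab_group_add \<Rightarrow> 'a) \<Rightarrow> 'a set \<Rightarrow> ('a \<Rightarrow> 'a \<Rightarrow> 'a) \<Rightarrow> bool" where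
  "bilinear_on sc C m \<longleftrightarrow>
     (\<forall>x\<in>C. \<forall>y\<in>C. \<forall>z\<in>C. m (x + y) z = m x z + m y z \<and> m x (y + z) = m x y + m x z) \<and>
     (\<forall>c. \<forall>x\<in>C. \<forall>y\<in>C. m (sc c x) y = sc c (m x y) \<and> m x (sc c y) = sc c (m x y))"

definition assoc_superalg ::
  "('k::field \<Rightarrow> 'a::ab_group_add \<Rightarrow> 'a) \<Rightarrow> ('a \<Rightarrow> 'a \<Rightarrow> 'a) \<Rightarrow> 'a set \<Rightarrow> 'a set \<Rightarrow> bool" where
  "assoc_superalg sc m A0 A1 \<longleftrightarrow>
     fin_dim_vs sc \<and> bilinear_on sc UNIV m \<and>
     (\<forall>x y z. m (m x y) z = m x (m y z)) \<and>
     module.subspace sc A0 \<and> module.subspace sc A1 \<and>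
     A0 \<inter> A1 = {0} \<and> (\<forall>x. \<exists>a\<in>A0. \<exists>b\<in>A1. x = a + b) \<and>
     (\<forall>x\<in>A0. \<forall>y\<in>A0. m x y \<in> A0) \<and> (\<forall>x\<in>A0. \<forall>y\<in>A1. m x y \<in> A1) \<and>
     (\<forall>x\<in>A1. \<forall>y\<in>A0. m x y \<in> A1) \<and> (\<forall>x\<in>A1. \<forall>y\<in>A1. m x y \<in> A0)"

definition odd_symmetric ::
  "('k::field \<Rightarrow> 'a::ab_group_add \<Rightarrow> 'a) \<Rightarrow> ('a \<Rightarrow> 'a \<Rightarrow> 'a) \<Rightarrow> 'a set \<Rightarrow> 'a set \<Rightarrow> ('a \<Rightarrow> 'a \<Rightarrow> 'k) \<Rightarrow> bool" where
  "odd_symmetric sc m A0 A1 B \<longleftrightarrow>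
     (\<forall>x y z. B (x + y) z = B x z + B y z \<and> B x (y + z) = B x y + B x z) \<and>
     (\<forall>c x y. B (sc c x) y = c * B x y \<and> B x (sc c y) = c * B x y) \<and>
     (\<forall>x\<in>A0. \<forall>y\<in>A0. B x y = 0) \<and> (\<forall>x\<in>A1. \<forall>y\<in>A1. B x y = 0) \<and>
     (\<forall>x\<in>A0. \<forall>y\<in>A0. B x y = B y x) \<and> (\<forall>x\<in>A0. \<forall>y\<in>A1. B x y = B y x) \<and>
     (\<forall>x\<in>A1. \<forall>y\<in>A0. B x y = B y x) \<and> (\<forall>x\<in>A1. \<forall>y\<in>A1. B x y = - B y x) \<and>
     (\<forall>x y z. B (m x y) z = B x (m y z)) \<and>
     (\<forall>x. (\<forall>y. B x y = 0) \<longrightarrow> x = 0)"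

definition graded_ideal ::
  "('k::field \<Rightarrow> 'a::ab_group_add \<Rightarrow> 'a) \<Rightarrow> ('a \<Rightarrow> 'a \<Rightarrow> 'a) \<Rightarrow> 'a set \<Rightarrow> 'a set \<Rightarrow> 'a set \<Rightarrow> bool" where
  "graded_ideal sc m A0 A1 I \<longleftrightarrow>
     module.subspace sc I \<and>
     (\<forall>a\<in>A0. \<forall>b\<in>A1. a + b \<in> I \<longrightarrow> a \<in> I \<and> b \<in> I) \<and>
     (\<forall>x\<in>I. \<forall>y. m x y \<in> I \<and> m y x \<in> I)"

definition nondeg_on :: "('a::zero \<Rightarrow> 'a \<Rightarrow> 'k::field) \<Rightarrow> 'a set \<Rightarrow> bool" where
  "nondeg_on B I \<longleftrightarrow> (\<forall>x\<in>I. (\<forall>y\<in>I. B x y = 0) \<longrightarrow> x = 0)"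

definition B_irreducible ::
  "('k::field \<Rightarrow> 'a::ab_group_add \<Rightarrow> 'a) \<Rightarrow> ('a \<Rightarrow> 'a \<Rightarrow> 'a) \<Rightarrow> 'a set \<Rightarrow> 'a set \<Rightarrow> ('a \<Rightarrow> 'a \<Rightarrow> 'k) \<Rightarrow> bool" where
  "B_irreducible sc m A0 A1 B \<longleftrightarrow>
     (UNIV :: 'a set) \<noteq> {0} \<and>
     (\<forall>I. graded_ideal sc m A0 A1 I \<and> nondeg_on B I \<longrightarrow> I = {0} \<or> I = UNIV)"

definition simple_superalg ::
  "('k::field \<Rightarrow> 'a::ab_group_add \<Rightarrow> 'a) \<Rightarrow> ('a \<Rightarrow> 'a \<Rightarrow> 'a) \<Rightarrow> 'a set \<Rightarrow> 'a set \<Rightarrow> bool" where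
  "simple_superalg sc m A0 A1 \<longleftrightarrow>
     (\<exists>x y. m x y \<noteq> 0) \<and>
     (\<forall>I. graded_ideal sc m A0 A1 I \<longrightarrow> I = {0} \<or> I = UNIV)"

definition alg_ideal ::
  "('k::field \<Rightarrow> 'a::ab_group_add \<Rightarrow> 'a) \<Rightarrow> 'a set \<Rightarrow> ('a \<Rightarrow> 'a \<Rightarrow> 'a) \<Rightarrow> 'a set \<Rightarrow> bool" where
  "alg_ideal sc C m J \<longleftrightarrow>
     module.subspace sc J \<and> J \<subseteq> C \<and> (\<forall>x\<in>J. \<forall>y\<in>C. m x y \<in> J \<and> m y x \<in> J)"

text \<open>prods m J n = set of all products x_0 (x_1 (... x_n)) with x_i in J (n+1 factors).\<close>
fun prods :: "('a \<Rightarrow> 'a \<Rightarrow> 'a) \<Rightarrow> 'a set \<Rightarrow> nat \<Rightarrow> 'a set" where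
  "prods m J 0 = J"
| "prods m J (Suc n) = {m x y | x y. x \<in> J \<and> y \<in> prods m J n}"

definition nilpotent_set :: "('a::zero \<Rightarrow> 'a \<Rightarrow> 'a) \<Rightarrow> 'a set \<Rightarrow> bool" where
  "nilpotent_set m J \<longleftrightarrow> (\<exists>n. prods m J n \<subseteq> {0})"

definition assoc_alg_on ::
  "('k::field \<Rightarrow> 'a::ab_group_add \<Rightarrow> 'a) \<Rightarrow> 'a set \<Rightarrow> ('a \<Rightarrow> 'a \<Rightarrow> 'a) \<Rightarrow> bool" where
  "assoc_alg_on sc C m \<longleftrightarrow>
     module.subspace sc C \<and> (\<forall>x\<in>C. \<forall>y\<in>C. m x y \<in> C) \<and> bilinear_on sc C m \<and>
     (\<forall>x\<in>C. \<forall>y\<in>C. \<forall>z\<in>C. m (m x y) z = m x (m y z))"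

text \<open>Semi-simple (finite-dimensional) associative algebra: zero radical, i.e.
no nonzero nilpotent two-sided ideal.\<close>
definition semisimple_alg ::
  "('k::field \<Rightarrow> 'a::ab_group_add \<Rightarrow> 'a) \<Rightarrow> 'a set \<Rightarrow> ('a \<Rightarrow> 'a \<Rightarrow> 'a) \<Rightarrow> bool" where
  "semisimple_alg sc C m \<longleftrightarrow> assoc_alg_on sc C m \<and>
     (\<forall>J. alg_ideal sc C m J \<and> nilpotent_set m J \<longrightarrow> J = {0})"

definition simple_alg ::
  "('k::field \<Rightarrow> 'a::ab_group_add \<Rightarrow> 'a) \<Rightarrow> 'a set \<Rightarrow> ('a \<Rightarrow> 'a \<Rightarrow> 'a) \<Rightarrow> bool" where
  "simple_alg sc C m \<longleftrightarrow> assoc_alg_on sc C m \<and>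
     (\<exists>x\<in>C. \<exists>y\<in>C. m x y \<noteq> 0) \<and>
     (\<forall>J. alg_ideal sc C m J \<longrightarrow> J = {0} \<or> J = C)"

text \<open>Dual space S^* of a subspace S: linear functionals on S (extended by 0 outside S).\<close>
definition dual_sp :: "('k::field \<Rightarrow> 'a::ab_group_add \<Rightarrow> 'a) \<Rightarrow> 'a set \<Rightarrow> ('a \<Rightarrow> 'k) set" where
  "dual_sp sc S = {f. (\<forall>x\<in>S. \<forall>y\<in>S. f (x + y) = f x + f y) \<and>
                      (\<forall>c. \<forall>x\<in>S. f (sc c x) = c * f x) \<and> (\<forall>x. x \<notin> S \<longrightarrow> f x = 0)}"

definition sdp_carrier :: "('k::field \<Rightarrow> 'a::ab_group_add \<Rightarrow> 'a) \<Rightarrow> 'a set \<Rightarrow> ('a \<times> ('a \<Rightarrow> 'k)) set" where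
  "sdp_carrier sc S = S \<times> dual_sp sc S"

definition sdp_add :: "'a::ab_group_add \<times> ('a \<Rightarrow> 'k::field) \<Rightarrow> 'a \<times> ('a \<Rightarrow> 'k) \<Rightarrow> 'a \<times> ('a \<Rightarrow> 'k)" where
  "sdp_add p q = (fst p + fst q, \<lambda>z. snd p z + snd q z)"

definition sdp_scale :: "('k::field \<Rightarrow> 'a::ab_group_add \<Rightarrow> 'a) \<Rightarrow> 'k \<Rightarrow> 'a \<times> ('a \<Rightarrow> 'k) \<Rightarrow> 'a \<times> ('a \<Rightarrow> 'k)" where
  "sdp_scale sc c p = (sc c (fst p), \<lambda>z. c * snd p z)"

text \<open>(x+f)(y+h) = xy + h o R_x + f o L_y.\<close>
definition sdp_mult :: "'a set \<Rightarrow> ('a \<Rightarrow> 'a \<Rightarrow> 'a) \<Rightarrow>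
    'a \<times> ('a \<Rightarrow> 'k::field) \<Rightarrow> 'a \<times> ('a \<Rightarrow> 'k) \<Rightarrow> 'a \<times> ('a \<Rightarrow> 'k)" where
  "sdp_mult S mS p q =
     (mS (fst p) (fst q),
      \<lambda>z. if z \<in> S then snd q (mS z (fst p)) + snd p (mS (fst q) z) else 0)"

definition sdp_superalg_iso ::
  "('k::field \<Rightarrow> 'a::ab_group_add \<Rightarrow> 'a) \<Rightarrow> ('a \<Rightarrow> 'a \<Rightarrow> 'a) \<Rightarrow> 'a set \<Rightarrow> 'a set \<Rightarrow>
   'a set \<Rightarrow> ('a \<Rightarrow> 'a \<Rightarrow> 'a) \<Rightarrow> ('a \<Rightarrow> 'a \<times> ('a \<Rightarrow> 'k)) \<Rightarrow> bool" where
  "sdp_superalg_iso sc m A0 A1 S mS \<phi> \<longleftrightarrow>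
     bij_betw \<phi> UNIV (sdp_carrier sc S) \<and>
     (\<forall>x y. \<phi> (x + y) = sdp_add (\<phi> x) (\<phi> y)) \<and>
     (\<forall>c x. \<phi> (sc c x) = sdp_scale sc c (\<phi> x)) \<and>
     (\<forall>x y. \<phi> (m x y) = sdp_mult S mS (\<phi> x) (\<phi> y)) \<and>
     \<phi> ` A0 = S \<times> {\<lambda>_. 0} \<and>
     \<phi> ` A1 = {0} \<times> dual_sp sc S"

end

theory Submission imports Defs begin

locale osa = finite_dimensional_vector_space sc Bas
  for sc :: "'k::field \<Rightarrow> 'a::ab_group_add \<Rightarrow> 'a" and Bas +
  fixes m :: "'a \<Rightarrow> 'a \<Rightarrow> 'a" and Ev Od :: "'a set" and B :: "'a \<Rightarrow> 'a \<Rightarrow> 'k"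
  assumes bil: "bilinear_on sc UNIV m"
  and assoc: "m (m x y) z = m x (m y z)"
  and subE: "subspace Ev" and subO: "subspace Od"
  and EO0: "Ev \<inter> Od = {0}" and dec: "\<exists>a\<in>Ev. \<exists>b\<in>Od. x = a + b"
  and EE: "x \<in> Ev \<Longrightarrow> y \<in> Ev \<Longrightarrow> m x y \<in> Ev"
  and EOO: "x \<in> Ev \<Longrightarrow> y \<in> Od \<Longrightarrow> m x y \<in> Od"
  and OEO: "x \<in> Od \<Longrightarrow> y \<in> Ev \<Longrightarrow> m x y \<in> Od"
  and OOE: "x \<in> Od \<Longrightarrow> y \<in> Od \<Longrightarrow> m x y \<in> Ev"
  and Badd1: "B (x + y) z = B x z + B y z" and Badd2: "B x (y + z) = B x y + B x z"
  and Bsc1: "B (sc c x) y = c * B x y" and Bsc2: "B x (sc c y) = c * B x y"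
  and BEE: "x \<in> Ev \<Longrightarrow> y \<in> Ev \<Longrightarrow> B x y = 0"
  and BOO: "x \<in> Od \<Longrightarrow> y \<in> Od \<Longrightarrow> B x y = 0"
  and BEOs: "x \<in> Ev \<Longrightarrow> y \<in> Od \<Longrightarrow> B x y = B y x"
  and Bassoc: "B (m x y) z = B x (m y z)"
  and Bnd: "(\<And>y. B x y = 0) \<Longrightarrow> x = 0"
  and sqz: "alg_ideal sc Ev m J \<Longrightarrow> (\<And>x y. x \<in> J \<Longrightarrow> y \<in> J \<Longrightarrow> m x y = 0) \<Longrightarrow> J = {0}"
begin

lemma madd1: "m (x + y) z = m x z + m y z" using bil unfolding bilinear_on_def by blast
lemma madd2: "m x (y + z) = m x y + m x z" using bil unfolding bilinear_on_def by blast
lemma msc1: "m (sc c x) y = sc c (m x y)" using bil unfolding bilinear_on_def by blast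
lemma msc2: "m x (sc c y) = sc c (m x y)" using bil unfolding bilinear_on_def by blast
lemma m0l[simp]: "m 0 y = 0"
proof - have "m 0 y + m 0 y = m 0 y + 0" using madd1[of 0 0 y] by simp thus ?thesis using add_left_imp_eq by blast qed
lemma m0r[simp]: "m x 0 = 0"
proof - have "m x 0 + m x 0 = m x 0 + 0" using madd2[of x 0 0] by simp thus ?thesis using add_left_imp_eq by blast qed
lemma mneg1: "m (- x) y = - m x y"
proof - have "m (- x) y + m x y = 0" using madd1[of "-x" x y] by simp thus ?thesis by (simp add: eq_neg_iff_add_eq_0) qed
lemma mneg2: "m x (- y) = - m x y"
proof - have "m x (- y) + m x y = 0" using madd2[of x "-y" y] by simp thus ?thesis by (simp add: eq_neg_iff_add_eq_0) qed
lemma mdiff1: "m (x - y) z = m x z - m y z" using madd1[of x "-y" z] by (simp add: mneg1)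
lemma mdiff2: "m x (y - z) = m x y - m x z" using madd2[of x y "-z"] by (simp add: mneg2)
lemma B0l[simp]: "B 0 y = 0"
proof - have "B 0 y + B 0 y = B 0 y + 0" using Badd1[of 0 0 y] by simp thus ?thesis using add_left_imp_eq by blast qed
lemma B0r[simp]: "B x 0 = 0"
proof - have "B x 0 + B x 0 = B x 0 + 0" using Badd2[of x 0 0] by simp thus ?thesis using add_left_imp_eq by blast qed
lemma Bneg1: "B (- x) y = - B x y"
proof - have "B (- x) y + B x y = 0" using Badd1[of "-x" x y] by simp thus ?thesis by (simp add: eq_neg_iff_add_eq_0) qed
lemma Bneg2: "B x (- y) = - B x y"
proof - have "B x (- y) + B x y = 0" using Badd2[of x "-y" y] by simp thus ?thesis by (simp add: eq_neg_iff_add_eq_0) qed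
lemma Bdiff1: "B (x - y) z = B x z - B y z" using Badd1[of x "-y" z] by (simp add: Bneg1)
lemma Bdiff2: "B x (y - z) = B x y - B x z" using Badd2[of x y "-z"] by (simp add: Bneg2)

lemma E0: "0 \<in> Ev" using subE subspace_0 by blast
lemma O0: "0 \<in> Od" using subO subspace_0 by blast

lemma uniq: "a \<in> Ev \<Longrightarrow> b \<in> Od \<Longrightarrow> a' \<in> Ev \<Longrightarrow> b' \<in> Od \<Longrightarrow> a + b = a' + b' \<Longrightarrow> a = a' \<and> b = b'"
proof -
  assume h: "a \<in> Ev" "b \<in> Od" "a' \<in> Ev" "b' \<in> Od" "a + b = a' + b'"
  have "a - a' = b' - b" using h(5) by (simp add: algebra_simps)
  moreover have "a - a' \<in> Ev" using h subE subspace_diff by blast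
  moreover have "b' - b \<in> Od" using h subO subspace_diff by blast
  ultimately have "a - a' \<in> Ev \<inter> Od" by simp
  hence "a - a' = 0" using EO0 by blast
  thus ?thesis using h(5) by simp
qed

lemma Bsym: "B x y = B y x"
proof -
  obtain x0 x1 where x: "x0 \<in> Ev" "x1 \<in> Od" "x = x0 + x1" using dec by blast
  obtain y0 y1 where y: "y0 \<in> Ev" "y1 \<in> Od" "y = y0 + y1" using dec by blast
  show ?thesis using x y BEOs[of x0 y1] BEOs[of y0 x1] by (simp add: Badd1 Badd2 BEE BOO)
qed

lemma ndE: "x \<in> Ev \<Longrightarrow> (\<And>y. y \<in> Od \<Longrightarrow> B x y = 0) \<Longrightarrow> x = 0"
proof -
  assume h: "x \<in> Ev" "\<And>y. y \<in> Od \<Longrightarrow> B x y = 0"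
  show "x = 0"
  proof (rule Bnd)
    fix y obtain y0 y1 where y: "y0 \<in> Ev" "y1 \<in> Od" "y = y0 + y1" using dec by blast
    show "B x y = 0" using h y by (simp add: Badd2 BEE)
  qed
qed

lemma ndO: "x \<in> Od \<Longrightarrow> (\<And>y. y \<in> Ev \<Longrightarrow> B x y = 0) \<Longrightarrow> x = 0"
proof -
  assume h: "x \<in> Od" "\<And>y. y \<in> Ev \<Longrightarrow> B x y = 0"
  show "x = 0"
  proof (rule Bnd)
    fix y obtain y0 y1 where y: "y0 \<in> Ev" "y1 \<in> Od" "y = y0 + y1" using dec by blast
    show "B x y = 0" using h y by (simp add: Badd2 BOO)
  qed
qed

lemma subspace_mult_l: "subspace {x. \<forall>y\<in>T. m x y \<in> V}" if "subspace V"
  unfolding subspace_def using that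
  by (auto simp: madd1 msc1 subspace_0 subspace_add subspace_scale)

lemma span_prod:
  assumes V: "subspace V" and ST: "\<And>a b. a \<in> S \<Longrightarrow> b \<in> T \<Longrightarrow> m a b \<in> V"
    and x: "x \<in> span S" and y: "y \<in> span T"
  shows "m x y \<in> V"
proof -
  have "\<forall>y\<in>span T. m x y \<in> V" using x
  proof (induct rule: span_induct)
    case base show ?case using subspace_mult_l[OF V] by simp
  next
    case (step a)
    have "subspace {y. m a y \<in> V}" unfolding subspace_def using V
      by (auto simp: madd2 msc2 subspace_0 subspace_add subspace_scale)
    moreover have "T \<subseteq> {y. m a y \<in> V}" using ST step by auto
    ultimately show ?case using span_minimal by blast
  qed
  thus ?thesis using y by blast
qed



lemma subspaceI: "0 \<in> S \<Longrightarrow> (\<And>x y. x\<in>S \<Longrightarrow> y\<in>S \<Longrightarrow> x+y\<in>S) \<Longrightarrow> (\<And>c x. x\<in>S \<Longrightarrow> sc c x \<in> S) \<Longrightarrow> subspace S"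
  by (simp add: subspace_def)

lemma subspace_zero: "subspace {0}" by (rule subspaceI) auto

lemma gen_zero:
  assumes G: "Gen \<subseteq> Ev"
    and cl: "\<And>e g. e \<in> Ev \<Longrightarrow> g \<in> Gen \<Longrightarrow> m e g \<in> span Gen \<and> m g e \<in> span Gen"
    and z: "\<And>g g'. g \<in> Gen \<Longrightarrow> g' \<in> Gen \<Longrightarrow> m g g' = 0"
  shows "Gen \<subseteq> {0}"
proof -
  have sG: "span Gen \<subseteq> Ev" using G subE span_minimal by blast
  have "alg_ideal sc Ev m (span Gen)"
    unfolding alg_ideal_def
  proof (intro conjI ballI)
    show "subspace (span Gen)" by simp
    show "span Gen \<subseteq> Ev" by (rule sG)
  next
    fix x y assume x: "x \<in> span Gen" and y: "y \<in> Ev"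
    show "m x y \<in> span Gen" using span_prod[of "span Gen" Gen Ev x y] cl x y span_superset by blast
    show "m y x \<in> span Gen" using span_prod[of "span Gen" Ev Gen y x] cl x y span_superset by blast
  qed
  moreover have "\<And>x y. x \<in> span Gen \<Longrightarrow> y \<in> span Gen \<Longrightarrow> m x y = 0"
    using span_prod[of "{0}" Gen Gen] subspace_zero z by blast
  ultimately have "span Gen = {0}" using sqz by blast
  thus ?thesis using span_superset by blast
qed

definition lideal :: "'a set \<Rightarrow> bool" where
  "lideal M \<longleftrightarrow> subspace M \<and> M \<subseteq> Ev \<and> (\<forall>x\<in>Ev. \<forall>y\<in>M. m x y \<in> M)"

lemma brauer:
  assumes M: "lideal M" "M \<noteq> {0}"
  shows "\<exists>e\<in>M. e \<noteq> 0 \<and> m e e = e"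
proof -
  let ?P = "\<lambda>N. lideal N \<and> N \<noteq> {0} \<and> N \<subseteq> M"
  obtain N where N: "?P N" and Nmin: "\<And>N'. ?P N' \<Longrightarrow> dim N \<le> dim N'"
    using ex_has_least_nat[of ?P M dim] M by auto
  have NE: "N \<subseteq> Ev" using N lideal_def by blast
  have minN: "N' = N" if "lideal N'" "N' \<subseteq> N" "N' \<noteq> {0}" for N'
  proof -
    have "dim N \<le> dim N'" using Nmin that N by blast
    thus ?thesis using subspace_dim_equal[of N' N] that N lideal_def by blast
  qed
  have "\<exists>a\<in>N. \<exists>x\<in>N. m a x \<noteq> 0"
  proof (rule ccontr)
    assume "\<not> ?thesis"
    hence Z: "\<And>a x. a \<in> N \<Longrightarrow> x \<in> N \<Longrightarrow> m a x = 0" by blast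
    let ?G = "{m a z | a z. a \<in> N \<and> z \<in> Ev}"
    have "?G \<subseteq> {0}"
    proof (rule gen_zero)
      show "?G \<subseteq> Ev" using NE EE by blast
    next
      fix e g assume e: "e \<in> Ev" and g: "g \<in> ?G"
      then obtain a z where az: "a \<in> N" "z \<in> Ev" "g = m a z" by blast
      have "m e g = m (m e a) z" using az assoc by simp
      moreover have "m e a \<in> N" using e az N lideal_def by blast
      ultimately have 1: "m e g \<in> ?G" using az(2) unfolding mem_Collect_eq by (intro exI[of _ "m e a"] exI[of _ z]) simp
      have "m g e = m a (m z e)" using az assoc by simp
      moreover have "m z e \<in> Ev" using az e EE by blast
      ultimately have 2: "m g e \<in> ?G" using az(1) unfolding mem_Collect_eq by (intro exI[of _ a] exI[of _ "m z e"]) simp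
      show "m e g \<in> span ?G \<and> m g e \<in> span ?G" using span_base[OF 1] span_base[OF 2] by blast
    next
      fix g g' assume "g \<in> ?G" "g' \<in> ?G"
      then obtain a z a' z' where az: "a \<in> N" "z \<in> Ev" "g = m a z" "a' \<in> N" "z' \<in> Ev" "g' = m a' z'" by blast
      have "m g g' = m (m a (m z a')) z'" using az by (simp add: assoc)
      moreover have "m z a' \<in> N" using az N lideal_def by blast
      ultimately show "m g g' = 0" using Z az by simp
    qed
    hence Z2: "\<And>a z. a \<in> N \<Longrightarrow> z \<in> Ev \<Longrightarrow> m a z = 0" by blast
    have "alg_ideal sc Ev m N" unfolding alg_ideal_def
    proof (intro conjI ballI)
      show "subspace N" "N \<subseteq> Ev" using N lideal_def by auto
    next
      fix x y assume "x \<in> N" "y \<in> Ev"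
      thus "m x y \<in> N" "m y x \<in> N" using N lideal_def Z2 subspace_0 by auto
    qed
    hence "N = {0}" using sqz Z by blast
    thus False using N by blast
  qed
  then obtain a x where ax: "a \<in> N" "x \<in> N" "m a x \<noteq> 0" by blast
  have xE: "x \<in> Ev" using ax NE by blast
  let ?Nx = "(\<lambda>b. m b x) ` N"
  have lN: "subspace N" "\<And>u v. u \<in> Ev \<Longrightarrow> v \<in> N \<Longrightarrow> m u v \<in> N" using N unfolding lideal_def by auto
  have "lideal ?Nx" unfolding lideal_def
  proof (intro conjI ballI)
    show "subspace ?Nx"
    proof (rule subspaceI)
      have "0 \<in> N" using lN subspace_0 by blast
      hence "m 0 x \<in> ?Nx" by (rule imageI)
      thus "0 \<in> ?Nx" by simp
    next
      fix y z assume "y \<in> ?Nx" "z \<in> ?Nx"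
      then obtain b b' where bb: "b \<in> N" "b' \<in> N" "y = m b x" "z = m b' x" by blast
      have bb': "b + b' \<in> N" using bb lN subspace_add by blast
      have "y + z = m (b + b') x" using bb madd1 by simp
      thus "y + z \<in> ?Nx" by (rule image_eqI[OF _ bb'])
    next
      fix c y assume "y \<in> ?Nx"
      then obtain b where bb: "b \<in> N" "y = m b x" by blast
      have bb': "sc c b \<in> N" using bb lN subspace_scale by blast
      have "sc c y = m (sc c b) x" using bb msc1 by simp
      thus "sc c y \<in> ?Nx" by (rule image_eqI[OF _ bb'])
    qed
    show "?Nx \<subseteq> Ev"
    proof
      fix y assume "y \<in> ?Nx"
      then obtain b where bb: "b \<in> N" "y = m b x" by blast
      thus "y \<in> Ev" using NE xE EE by blast
    qed
  next
    fix e y assume e: "e \<in> Ev" and "y \<in> ?Nx"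
    then obtain b where b: "b \<in> N" "y = m b x" by blast
    have b': "m e b \<in> N" using e b lN by blast
    have "m e y = m (m e b) x" using b assoc by simp
    thus "m e y \<in> ?Nx" by (rule image_eqI[OF _ b'])
  qed
  moreover have "?Nx \<subseteq> N"
  proof
    fix y assume "y \<in> ?Nx"
    then obtain b where bb: "b \<in> N" "y = m b x" by blast
    thus "y \<in> N" using NE lN ax by blast
  qed
  moreover have "m a x \<in> ?Nx" using ax by blast
  hence "?Nx \<noteq> {0}" using ax by force
  ultimately have "?Nx = N" using minN by blast
  then obtain e where e: "e \<in> N" "m e x = x" using ax(2) by (metis (no_types, lifting) imageE)
  let ?A = "{b \<in> N. m b x = 0}"
  have "lideal ?A" unfolding lideal_def
  proof (intro conjI ballI)
    show "subspace ?A"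
    proof (rule subspaceI)
      show "0 \<in> ?A" using lN subspace_0 by auto
    next
      fix y z assume "y \<in> ?A" "z \<in> ?A"
      thus "y + z \<in> ?A" using lN subspace_add madd1 by auto
    next
      fix c y assume "y \<in> ?A"
      thus "sc c y \<in> ?A" using lN subspace_scale msc1 by auto
    qed
    show "?A \<subseteq> Ev" using NE by blast
  next
    fix z y assume "z \<in> Ev" "y \<in> ?A"
    thus "m z y \<in> ?A" using lN assoc by simp
  qed
  moreover have "?A \<subseteq> N" by blast
  moreover have "?A \<noteq> N" using ax by blast
  ultimately have A0: "?A = {0}" using minN by blast
  have eE: "e \<in> Ev" using e NE by blast
  have "m e e \<in> N" using e eE lN by blast
  hence "m e e - e \<in> N" using e lN subspace_diff by blast
  moreover have "m (m e e - e) x = 0" using e by (simp add: mdiff1 assoc)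
  ultimately have "m e e - e \<in> ?A" by blast
  hence ee: "m e e - e = 0" using A0 by blast
  have ne: "e \<noteq> 0" using e ax by auto
  have NM: "N \<subseteq> M" using N by (elim conjE)
  have eM: "e \<in> M" using NM e(1) by (rule subsetD)
  show ?thesis
  proof (rule bexI[OF _ eM])
    show "e \<noteq> 0 \<and> m e e = e" using ne ee by simp
  qed
qed


lemma idealD:
  assumes "alg_ideal sc Ev m J"
  shows "subspace J" "J \<subseteq> Ev" "\<And>x y. x \<in> J \<Longrightarrow> y \<in> Ev \<Longrightarrow> m x y \<in> J"
    "\<And>x y. x \<in> J \<Longrightarrow> y \<in> Ev \<Longrightarrow> m y x \<in> J"
  using assms unfolding alg_ideal_def by auto

lemma idem_lemma:
  assumes ee: "m e e = e"
  shows "m e (m e y) = m e y"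
proof -
  have "m e (m e y) = m (m e e) y" by (simp add: assoc)
  thus ?thesis using ee by simp
qed

lemma ideal_unit:
  assumes J: "alg_ideal sc Ev m J" "J \<noteq> {0}"
  shows "\<exists>u\<in>J. \<forall>x\<in>J. m x u = x \<and> m u x = x"
proof -
  note JD = idealD[OF J(1)]
  let ?R = "\<lambda>e. {x \<in> J. m x e = 0}"
  let ?P = "\<lambda>e. e \<in> J \<and> m e e = e"
  have P0: "?P 0" using JD(1) subspace_0 by simp
  obtain e where Pe: "?P e" and emin: "\<And>e'. ?P e' \<Longrightarrow> dim (?R e) \<le> dim (?R e')"
    using ex_has_least_nat[of ?P 0 "\<lambda>e. dim (?R e)"] P0 by blast
  have eJ: "e \<in> J" and ee: "m e e = e" using Pe by auto
  have eE: "e \<in> Ev" using eJ JD(2) by blast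
  have subR: "subspace (?R g)" for g
  proof (rule subspaceI)
    show "0 \<in> ?R g" using JD(1) subspace_0 by simp
  next
    fix y z assume "y \<in> ?R g" "z \<in> ?R g"
    thus "y + z \<in> ?R g" using JD(1) subspace_add madd1 by auto
  next
    fix c y assume "y \<in> ?R g"
    thus "sc c y \<in> ?R g" using JD(1) subspace_scale msc1 by auto
  qed
  have Re0: "?R e = {0}"
  proof (rule ccontr)
    assume ne: "?R e \<noteq> {0}"
    have "lideal (?R e)" unfolding lideal_def
    proof (intro conjI ballI)
      show "subspace (?R e)" by (rule subR)
      show "?R e \<subseteq> Ev" using JD(2) by blast
    next
      fix z y assume z: "z \<in> Ev" and y: "y \<in> ?R e"
      have "m z y \<in> J" using z y JD(4) by blast
      moreover have "m (m z y) e = 0" using y by (simp add: assoc)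
      ultimately show "m z y \<in> ?R e" by blast
    qed
    then obtain f where f: "f \<in> ?R e" "f \<noteq> 0" "m f f = f" using brauer ne by blast
    have fJ: "f \<in> J" and fe: "m f e = 0" using f by auto
    have fE: "f \<in> Ev" using fJ JD(2) by blast
    have efy: "m f (m e y) = 0" for y
    proof -
      have "m f (m e y) = m (m f e) y" by (simp add: assoc)
      thus ?thesis using fe by simp
    qed
    note eey = idem_lemma[OF ee] and ffy = idem_lemma[OF f(3)]
    define g where "g = e + f - m e f"
    have efJ: "m e f \<in> J" using JD(3) eJ fE by blast
    have gJ: "g \<in> J" unfolding g_def using eJ fJ efJ JD(1) subspace_add subspace_diff by blast
    have ge: "m g e = e" unfolding g_def using ee fe by (simp add: madd1 mdiff1 assoc)
    have fg: "m f g = f" unfolding g_def using fe f(3) efy by (simp add: madd2 mdiff2)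
    have gg: "m g g = g" unfolding g_def using ee fe f(3) efy eey ffy
      by (simp add: madd1 madd2 mdiff1 mdiff2 assoc algebra_simps)
    have "?R g \<subseteq> ?R e"
    proof
      fix x assume x: "x \<in> ?R g"
      have "m x e = m x (m g e)" using ge by simp
      also have "\<dots> = m (m x g) e" by (simp add: assoc)
      also have "\<dots> = 0" using x by simp
      finally show "x \<in> ?R e" using x by blast
    qed
    moreover have "f \<notin> ?R g" using fg f(2) by simp
    moreover have "f \<in> ?R e" using f(1) .
    ultimately have "?R g \<subset> ?R e" by blast
    moreover have e1: "span (?R g) = ?R g" "span (?R e) = ?R e" by (rule span_eq_iff[THEN iffD2, OF subR])+
    ultimately have "span (?R g) \<subset> span (?R e)" by (simp only: e1)
    hence "dim (?R g) < dim (?R e)" by (rule dim_psubset)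
    moreover have "dim (?R e) \<le> dim (?R g)" using emin gJ gg by blast
    ultimately show False by simp
  qed
  have right: "m x e = x" if x: "x \<in> J" for x
  proof -
    have "x - m x e \<in> J" using x JD(1,3) eE subspace_diff by blast
    moreover have "m (x - m x e) e = 0" using ee by (simp add: mdiff1 assoc)
    ultimately have "x - m x e \<in> ?R e" by blast
    thus ?thesis using Re0 by simp
  qed
  let ?D = "{x \<in> J. m e x = 0}"
  have subD: "subspace ?D"
  proof (rule subspaceI)
    show "0 \<in> ?D" using JD(1) subspace_0 by simp
  next
    fix y z assume "y \<in> ?D" "z \<in> ?D"
    thus "y + z \<in> ?D" using JD(1) subspace_add madd2 by auto
  next
    fix c y assume "y \<in> ?D"
    thus "sc c y \<in> ?D" using JD(1) subspace_scale msc2 by auto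
  qed
  have Dr: "m d z \<in> ?D" if "d \<in> ?D" "z \<in> Ev" for d z
  proof -
    have "m d z \<in> J" using that JD(3) by blast
    moreover have "m e (m d z) = 0" using that by (simp add: assoc[symmetric])
    ultimately show ?thesis by blast
  qed
  have JDz: "m y d = 0" if "y \<in> J" "d \<in> ?D" for y d
  proof -
    have "m y d = m (m y e) d" using right that by simp
    also have "\<dots> = m y (m e d)" by (simp add: assoc)
    also have "\<dots> = 0" using that by simp
    finally show ?thesis .
  qed
  let ?G = "{m z d | z d. z \<in> Ev \<and> d \<in> ?D}"
  have "?G \<subseteq> {0}"
  proof (rule gen_zero)
    show "?G \<subseteq> Ev"
    proof
      fix y assume "y \<in> ?G"
      then obtain z d where zd: "z \<in> Ev" "d \<in> ?D" "y = m z d" by blast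
      have "d \<in> Ev" using zd JD(2) by blast
      thus "y \<in> Ev" using zd EE by blast
    qed
  next
    fix a g assume a: "a \<in> Ev" and g: "g \<in> ?G"
    then obtain z d where zd: "z \<in> Ev" "d \<in> ?D" "g = m z d" by blast
    have az: "m a z \<in> Ev" using a zd EE by blast
    have "m a g = m (m a z) d" using zd by (simp add: assoc)
    hence 1: "m a g \<in> ?G" using az zd(2) unfolding mem_Collect_eq by (intro exI[of _ "m a z"] exI[of _ d]) simp
    have dz: "m d a \<in> ?D" using Dr zd a by blast
    have "m g a = m z (m d a)" using zd by (simp add: assoc)
    hence 2: "m g a \<in> ?G" using zd(1) dz unfolding mem_Collect_eq by (intro exI[of _ z] exI[of _ "m d a"]) simp
    show "m a g \<in> span ?G \<and> m g a \<in> span ?G" using span_base[OF 1] span_base[OF 2] by blast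
  next
    fix g g' assume "g \<in> ?G" "g' \<in> ?G"
    then obtain z d z' d' where zd: "z \<in> Ev" "d \<in> ?D" "g = m z d" "z' \<in> Ev" "d' \<in> ?D" "g' = m z' d'" by blast
    have dz: "m d z' \<in> ?D" using Dr zd by blast
    hence "m (m d z') d' = 0" using JDz zd(5) by blast
    hence "m d (m z' d') = 0" by (simp add: assoc)
    thus "m g g' = 0" using zd by (simp add: assoc)
  qed
  hence EDz: "\<And>z d. z \<in> Ev \<Longrightarrow> d \<in> ?D \<Longrightarrow> m z d = 0" by blast
  have "alg_ideal sc Ev m ?D" unfolding alg_ideal_def
  proof (intro conjI ballI)
    show "subspace ?D" by (rule subD)
    show "?D \<subseteq> Ev" using JD(2) by blast
  next
    fix x y assume "x \<in> ?D" "y \<in> Ev"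
    thus "m x y \<in> ?D" "m y x \<in> ?D" using Dr EDz JD(1) subspace_0 by auto
  qed
  moreover have "\<And>x y. x \<in> ?D \<Longrightarrow> y \<in> ?D \<Longrightarrow> m x y = 0" using EDz JD(2) by blast
  ultimately have D0: "?D = {0}" by (rule sqz)
  have left: "m e x = x" if x: "x \<in> J" for x
  proof -
    have "x - m e x \<in> J" using x JD(1,4) eE subspace_diff by blast
    moreover have "m e (x - m e x) = 0" using idem_lemma[OF ee] by (simp add: mdiff2)
    ultimately have "x - m e x \<in> ?D" by blast
    thus ?thesis using D0 by simp
  qed
  show ?thesis using eJ left right by blast
qed

lemma decE: obtains a b where "a \<in> Ev" "b \<in> Od" "(x::'a) = a + b" using dec by blast

lemma EvNZ: assumes "(UNIV::'a set) \<noteq> {0}" shows "Ev \<noteq> {0}"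
proof
  assume E0': "Ev = {0}"
  have "x = 0" for x :: 'a
  proof -
    obtain a b where ab: "a \<in> Ev" "b \<in> Od" "x = a + b" by (rule decE)
    have "b = 0" using ab(2) by (rule ndO) (use E0' in simp)
    thus ?thesis using ab E0' by simp
  qed
  thus False using assms by auto
qed

lemma Ev_ideal: "alg_ideal sc Ev m Ev" unfolding alg_ideal_def using subE EE by blast

lemma unit_ext:
  assumes one: "one \<in> Ev" "\<And>x. x \<in> Ev \<Longrightarrow> m x one = x \<and> m one x = x"
  shows "m one y = y \<and> m y one = y"
proof -
  have Oc: "m one w = w \<and> m w one = w" if w: "w \<in> Od" for w
  proof
    have "m one w - w = 0"
    proof (rule ndO)
      show "m one w - w \<in> Od" using w one EOO subO subspace_diff by blast
    next
      fix y assume y: "y \<in> Ev"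
      have "B (m one w) y = B one (m w y)" by (rule Bassoc)
      also have "\<dots> = B (m w y) one" by (rule Bsym)
      also have "\<dots> = B w (m y one)" by (rule Bassoc)
      also have "\<dots> = B w y" using one y by simp
      finally show "B (m one w - w) y = 0" by (simp add: Bdiff1)
    qed
    thus "m one w = w" by simp
    have "m w one - w = 0"
    proof (rule ndO)
      show "m w one - w \<in> Od" using w one OEO subO subspace_diff by blast
    next
      fix y assume y: "y \<in> Ev"
      have "B (m w one) y = B w (m one y)" by (rule Bassoc)
      also have "\<dots> = B w y" using one y by simp
      finally show "B (m w one - w) y = 0" by (simp add: Bdiff1)
    qed
    thus "m w one = w" by simp
  qed
  obtain a b where ab: "a \<in> Ev" "b \<in> Od" "y = a + b" by (rule decE)
  show ?thesis using ab one Oc[OF ab(2)] by (simp add: madd1 madd2)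
qed

lemma perp_span:
  assumes "\<And>s. s \<in> S \<Longrightarrow> B s w = 0" "y \<in> span S"
  shows "B y w = 0"
  using assms(2)
proof (induct rule: span_induct)
  case base
  show ?case by (rule subspaceI) (auto simp: Badd1 Bsc1)
next
  case (step x) thus ?case using assms(1) by simp
qed

lemma sep:
  assumes "finite S" "S \<subseteq> Ev"
  shows "x \<in> Ev \<Longrightarrow> x \<notin> span S \<Longrightarrow> \<exists>w\<in>Od. B x w \<noteq> 0 \<and> (\<forall>s\<in>S. B s w = 0)"
  using assms
proof (induct S arbitrary: x rule: finite_induct)
  case empty
  hence "x \<noteq> 0" by simp
  then obtain w where "w \<in> Od" "B x w \<noteq> 0" using ndE[OF empty(1)] by blast
  thus ?case by blast
next
  case (insert a S)
  have SE: "S \<subseteq> Ev" and aE: "a \<in> Ev" using insert by auto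
  show ?case
  proof (cases "a \<in> span S")
    case True
    hence "span (insert a S) = span S" by (rule span_redundant)
    hence "x \<notin> span S" using insert by simp
    then obtain w where w: "w \<in> Od" "B x w \<noteq> 0" "\<forall>s\<in>S. B s w = 0" using insert SE by blast
    have "B a w = 0" using perp_span[of S w a] w True by blast
    thus ?thesis using w by auto
  next
    case False
    then obtain oa where oa: "oa \<in> Od" "B a oa \<noteq> 0" "\<forall>s\<in>S. B s oa = 0" using insert(3)[OF aE] SE by blast
    define oa' where "oa' = sc (inverse (B a oa)) oa"
    have oa'O: "oa' \<in> Od" unfolding oa'_def using oa subO subspace_scale by blast
    have a1: "B a oa' = 1" unfolding oa'_def using oa by (simp add: Bsc2)
    have oaS: "\<forall>s\<in>S. B s oa' = 0" unfolding oa'_def using oa by (simp add: Bsc2)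
    define c where "c = B x oa'"
    define x' where "x' = x - sc c a"
    have x'E: "x' \<in> Ev" unfolding x'_def using insert(4) aE subE subspace_diff subspace_scale by blast
    have "x' \<notin> span S"
    proof
      assume "x' \<in> span S"
      hence "x \<in> span (insert a S)" unfolding x'_def using span_breakdown_eq by blast
      thus False using insert by blast
    qed
    then obtain w where w: "w \<in> Od" "B x' w \<noteq> 0" "\<forall>s\<in>S. B s w = 0" using insert(3)[OF x'E] SE by blast
    define w' where "w' = w - sc (B a w) oa'"
    have w'O: "w' \<in> Od" unfolding w'_def using w oa'O subO subspace_diff subspace_scale by blast
    have "\<forall>s\<in>S. B s w' = 0" unfolding w'_def using w oaS by (simp add: Bdiff2 Bsc2)
    moreover have "B a w' = 0" unfolding w'_def using a1 by (simp add: Bdiff2 Bsc2)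
    moreover have "B x w' = B x' w" unfolding w'_def x'_def c_def
      by (simp add: Bdiff2 Bsc2 Bdiff1 Bsc1 mult.commute)
    ultimately show ?thesis using w w'O by (intro bexI[of _ "w'"]) auto
  qed
qed

lemma rep:
  assumes "finite S" "S \<subseteq> Ev"
  shows "(\<forall>x\<in>span S. \<forall>y\<in>span S. f (x + y) = f x + f y) \<Longrightarrow> (\<forall>c. \<forall>x\<in>span S. f (sc c x) = c * f x)
    \<Longrightarrow> \<exists>w\<in>Od. \<forall>s\<in>span S. B s w = f s"
  using assms
proof (induct S arbitrary: f rule: finite_induct)
  case empty
  have "f (0 + 0) = f 0 + f 0" using empty(1) span_zero by blast
  hence "f 0 + f 0 = f 0 + 0" by simp
  hence "f 0 = 0" using add_left_imp_eq by blast
  thus ?case using O0 by auto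
next
  case (insert a S)
  have SE: "S \<subseteq> Ev" and aE: "a \<in> Ev" using insert by auto
  have sub: "span S \<subseteq> span (insert a S)" by (rule span_mono) blast
  have l1: "\<forall>x\<in>span S. \<forall>y\<in>span S. f (x + y) = f x + f y"
  proof (intro ballI)
    fix x y assume "x \<in> span S" "y \<in> span S"
    hence "x \<in> span (insert a S)" "y \<in> span (insert a S)" using sub by auto
    thus "f (x + y) = f x + f y" using insert(4) by simp
  qed
  have l2: "\<forall>c. \<forall>x\<in>span S. f (sc c x) = c * f x"
  proof (intro allI ballI)
    fix c x assume "x \<in> span S"
    hence "x \<in> span (insert a S)" using sub by auto
    thus "f (sc c x) = c * f x" using insert(5) by simp
  qed
  have "\<exists>w\<in>Od. \<forall>s\<in>span S. B s w = f s"
    by (rule insert(3); (fact SE l1 l2)?)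
  then obtain o0 where o0: "o0 \<in> Od" "\<forall>s\<in>span S. B s o0 = f s" by blast
  show ?case
  proof (cases "a \<in> span S")
    case True
    hence "span (insert a S) = span S" by (rule span_redundant)
    thus ?thesis using o0 by (intro bexI[of _ o0]) simp_all
  next
    case False
    obtain oa where oa: "oa \<in> Od" "B a oa \<noteq> 0" "\<forall>s\<in>S. B s oa = 0" using sep[OF insert(1) SE aE False] by blast
    define oa' where "oa' = sc (inverse (B a oa)) oa"
    have oa'O: "oa' \<in> Od" unfolding oa'_def using oa subO subspace_scale by blast
    have a1: "B a oa' = 1" unfolding oa'_def using oa by (simp add: Bsc2)
    have oaS: "\<forall>s\<in>S. B s oa' = 0" unfolding oa'_def using oa by (simp add: Bsc2)
    have oaSp: "B s oa' = 0" if "s \<in> span S" for s using perp_span[of S oa' s] oaS that by blast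
    define w where "w = o0 + sc (f a - B a o0) oa'"
    have oO: "w \<in> Od" unfolding w_def using o0 oa'O subO subspace_add subspace_scale by blast
    have "B y w = f y" if y: "y \<in> span (insert a S)" for y
    proof -
      obtain k where k: "y - sc k a \<in> span S" using y span_breakdown_eq by blast
      define s where "s = y - sc k a"
      have ys: "y = s + sc k a" unfolding s_def by simp
      have sS: "s \<in> span S" using k s_def by simp
      have s': "s \<in> span (insert a S)" using sS sub by blast
      have ka: "sc k a \<in> span (insert a S)" by (simp add: span_base span_scale)
      have a': "a \<in> span (insert a S)" by (simp add: span_base)
      have "f y = f s + f (sc k a)" using insert(4) s' ka ys by simp
      also have "\<dots> = f s + k * f a" using insert(5) a' by simp
      finally have fy: "f y = f s + k * f a" .
      have "B s w = f s" unfolding w_def using o0 sS oaSp[OF sS] by (simp add: Badd2 Bsc2)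
      moreover have "B a w = f a" unfolding w_def using a1 by (simp add: Badd2 Bsc2)
      ultimately show ?thesis using fy ys by (simp add: Badd1 Bsc1)
    qed
    thus ?thesis using oO by blast
  qed
qed

definition p0 :: "'a \<Rightarrow> 'a" where "p0 x = (SOME a. a \<in> Ev \<and> x - a \<in> Od)"

lemma p0: "p0 x \<in> Ev \<and> x - p0 x \<in> Od"
proof -
  obtain a b where ab: "a \<in> Ev" "b \<in> Od" "x = a + b" by (rule decE)
  hence "\<exists>a. a \<in> Ev \<and> x - a \<in> Od" by (intro exI[of _ a]) simp
  thus ?thesis unfolding p0_def by (rule someI_ex)
qed

lemma p0_eq: "a \<in> Ev \<Longrightarrow> b \<in> Od \<Longrightarrow> p0 (a + b) = a"
proof -
  assume ab: "a \<in> Ev" "b \<in> Od"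
  have "p0 (a + b) + (a + b - p0 (a + b)) = a + b" by simp
  thus ?thesis using uniq[of "p0 (a+b)" "a + b - p0 (a + b)" a b] p0 ab by blast
qed

lemma p0_E: "a \<in> Ev \<Longrightarrow> p0 a = a" using p0_eq[of a 0] O0 by simp
lemma p0_O: "b \<in> Od \<Longrightarrow> p0 b = 0" using p0_eq[of 0 b] E0 by simp

lemma p0_add: "p0 (x + y) = p0 x + p0 y"
proof -
  have "x + y = (p0 x + p0 y) + ((x - p0 x) + (y - p0 y))" by simp
  hence "p0 (x + y) = p0 (p0 x + p0 y + ((x - p0 x) + (y - p0 y)))" by simp
  also have "\<dots> = p0 x + p0 y"
    by (rule p0_eq) (use p0 subE subO subspace_add in blast)+
  finally show ?thesis .
qed

lemma p0_sc: "p0 (sc c x) = sc c (p0 x)"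
proof -
  have "sc c x = sc c (p0 x) + sc c (x - p0 x)" by (simp add: scale_right_diff_distrib)
  hence "p0 (sc c x) = p0 (sc c (p0 x) + sc c (x - p0 x))" by simp
  also have "\<dots> = sc c (p0 x)"
    by (rule p0_eq) (use p0 subE subO subspace_scale in blast)+
  finally show ?thesis .
qed

lemma Ev_span: "span (p0 ` Bas) = Ev"
proof
  show "span (p0 ` Bas) \<subseteq> Ev" using p0 subE span_minimal by (metis image_subsetI)
next
  show "Ev \<subseteq> span (p0 ` Bas)"
  proof
    fix x assume x: "x \<in> Ev"
    have "x \<in> span Bas" using span_Basis by simp
    hence "p0 x \<in> span (p0 ` Bas)"
    proof (induct rule: span_induct)
      case base show ?case by (rule subspaceI) (auto simp: p0_add p0_sc span_zero span_add span_scale p0_E[OF E0])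
    next
      case (step y) thus ?case by (simp add: span_base)
    qed
    thus "x \<in> span (p0 ` Bas)" using p0_E[OF x] by simp
  qed
qed

lemma rep_E:
  assumes "\<forall>x\<in>Ev. \<forall>y\<in>Ev. f (x + y) = f x + f y" "\<forall>c. \<forall>x\<in>Ev. f (sc c x) = c * f x"
  shows "\<exists>w\<in>Od. \<forall>s\<in>Ev. B s w = f s"
  using rep[of "p0 ` Bas" f] assms Ev_span finite_Basis p0 by (simp add: image_subsetI)

end

locale osa2 = osa +
  assumes irr: "B_irreducible sc m Ev Od B"
  and nsimp: "\<not> simple_superalg sc m Ev Od"
begin

lemma EvNZ': "Ev \<noteq> {0}" using irr EvNZ unfolding B_irreducible_def by blast

lemma one_ex: "\<exists>one\<in>Ev. \<forall>y. m one y = y \<and> m y one = y"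
proof -
  obtain one where one: "one \<in> Ev" "\<forall>x\<in>Ev. m x one = x \<and> m one x = x"
    using ideal_unit[OF Ev_ideal EvNZ'] by blast
  show ?thesis using one unit_ext[of one] by blast
qed

lemma irrD: "graded_ideal sc m Ev Od I \<Longrightarrow> nondeg_on B I \<Longrightarrow> I = {0} \<or> I = UNIV"
  using irr unfolding B_irreducible_def by blast

lemma Esimple:
  assumes J: "alg_ideal sc Ev m J"
  shows "J = {0} \<or> J = Ev"
proof (rule ccontr)
  assume nJ: "\<not> (J = {0} \<or> J = Ev)"
  note JD = idealD[OF J]
  obtain one where one: "one \<in> Ev" "\<And>y. m one y = y \<and> m y one = y" using one_ex by blast
  obtain u where u: "u \<in> J" "\<And>x. x \<in> J \<Longrightarrow> m x u = x \<and> m u x = x"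
    using ideal_unit[OF J] nJ by blast
  have uE: "u \<in> Ev" using u JD(2) by blast
  have uu: "m u u = u" using u by blast
  have cE: "m u x = m x u" if x: "x \<in> Ev" for x
  proof -
    have 1: "m u x \<in> J" using JD(3) u(1) x by blast
    have 2: "m x u \<in> J" using JD(4) u(1) x by blast
    have "m u x = m (m u x) u" using u(2)[OF 1] by simp
    also have "\<dots> = m u (m x u)" by (simp add: assoc)
    also have "\<dots> = m x u" using u(2)[OF 2] by simp
    finally show ?thesis .
  qed
  have cO: "m u w = m w u" if w: "w \<in> Od" for w
  proof -
    have "m u w - m w u = 0"
    proof (rule ndO)
      show "m u w - m w u \<in> Od" using w uE EOO OEO subO subspace_diff by blast
    next
      fix y assume y: "y \<in> Ev"
      have "B (m u w) y = B u (m w y)" by (rule Bassoc)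
      also have "\<dots> = B (m w y) u" by (rule Bsym)
      also have "\<dots> = B w (m y u)" by (rule Bassoc)
      also have "\<dots> = B w (m u y)" using cE[OF y] by simp
      also have "\<dots> = B (m w u) y" by (rule Bassoc[symmetric])
      finally show "B (m u w - m w u) y = 0" by (simp add: Bdiff1)
    qed
    thus ?thesis by simp
  qed
  have cen: "m u x = m x u" for x
  proof -
    obtain a b where ab: "a \<in> Ev" "b \<in> Od" "x = a + b" by (rule decE)
    show ?thesis using ab cE cO by (simp add: madd1 madd2)
  qed
  let ?K = "{x. m u x = x}"
  have gK: "graded_ideal sc m Ev Od ?K" unfolding graded_ideal_def
  proof (intro conjI ballI allI impI)
    show "subspace ?K" by (rule subspaceI) (auto simp: madd2 msc2)
  next
    fix a b assume ab: "a \<in> Ev" "b \<in> Od" "a + b \<in> ?K"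
    have "m u a + m u b = a + b" using ab(3) by (simp add: madd2)
    moreover have "m u a \<in> Ev" using uE ab EE by blast
    moreover have "m u b \<in> Od" using uE ab EOO by blast
    ultimately have "m u a = a \<and> m u b = b" using uniq ab by blast
    thus "a \<in> ?K" "b \<in> ?K" by auto
  next
    fix x y assume x: "x \<in> ?K"
    have "m u (m x y) = m (m u x) y" by (simp add: assoc)
    thus "m x y \<in> ?K" using x by simp
    have "m u (m y x) = m (m u y) x" by (simp add: assoc)
    also have "\<dots> = m (m y u) x" using cen by simp
    also have "\<dots> = m y (m u x)" by (simp add: assoc)
    finally show "m y x \<in> ?K" using x by simp
  qed
  have nK: "nondeg_on B ?K" unfolding nondeg_on_def
  proof (intro ballI impI)
    fix k assume k: "k \<in> ?K" and kz: "\<forall>z\<in>?K. B k z = 0"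
    show "k = 0"
    proof (rule Bnd)
      fix y
      have uy: "m u y \<in> ?K" using uu by (simp add: assoc[symmetric])
      have "B k (y - m u y) = B (m u k) (y - m u y)" using k by simp
      also have "\<dots> = B (m k u) (y - m u y)" using cen by simp
      also have "\<dots> = B k (m u (y - m u y))" by (rule Bassoc)
      also have "\<dots> = 0" using uu by (simp add: mdiff2 assoc[symmetric])
      finally have "B k (y - m u y) = 0" .
      moreover have "B k (m u y) = 0" using kz uy by blast
      ultimately show "B k y = 0" by (simp add: Bdiff2)
    qed
  qed
  have "?K = {0} \<or> ?K = UNIV" using irrD[OF gK nK] .
  moreover have "u \<noteq> 0"
  proof
    assume "u = 0"
    hence "\<forall>x\<in>J. x = 0" using u(2) by force
    thus False using nJ JD(1) subspace_0 by blast
  qed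
  moreover have "u \<in> ?K" using uu by simp
  ultimately have "?K = UNIV" by blast
  hence "m u one = one" by blast
  hence "u = one" using one(2) by simp
  hence "Ev \<subseteq> J" using JD(3) u(1) one(2) by (metis subsetI)
  thus False using nJ JD(2) by blast
qed


lemma gradedD:
  assumes "graded_ideal sc m Ev Od I"
  shows "subspace I" "\<And>a b. a \<in> Ev \<Longrightarrow> b \<in> Od \<Longrightarrow> a + b \<in> I \<Longrightarrow> a \<in> I \<and> b \<in> I"
    "\<And>x y. x \<in> I \<Longrightarrow> m x y \<in> I" "\<And>x y. x \<in> I \<Longrightarrow> m y x \<in> I"
  using assms unfolding graded_ideal_def by auto

lemma OOz:
  assumes x: "x \<in> Od" and y: "y \<in> Od"
  shows "m x y = 0"
proof -
  obtain one where one: "one \<in> Ev" "\<And>y. m one y = y \<and> m y one = y" using one_ex by blast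
  have one0: "one \<noteq> 0"
  proof
    assume "one = 0"
    hence "\<forall>x\<in>Ev. x = 0" using one(2) by (metis m0r)
    thus False using EvNZ' E0 by blast
  qed
  have "\<exists>x y. m x y \<noteq> 0" using one one0 by metis
  then obtain G where G: "graded_ideal sc m Ev Od G" "G \<noteq> {0}" "G \<noteq> UNIV"
    using nsimp unfolding simple_superalg_def by blast
  note GD = gradedD[OF G(1)]
  let ?Gp = "{y. \<forall>x\<in>G. B x y = 0}"
  let ?H = "G \<inter> ?Gp"
  have subGp: "subspace ?Gp" by (rule subspaceI) (auto simp: Badd2 Bsc2)
  have gH: "graded_ideal sc m Ev Od ?H" unfolding graded_ideal_def
  proof (intro conjI ballI allI impI)
    show "subspace ?H" using GD(1) subGp subspace_inter by blast
  next
    fix a b assume ab: "a \<in> Ev" "b \<in> Od" "a + b \<in> ?H"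
    have aG: "a \<in> G" and bG: "b \<in> G" using GD(2) ab by blast+
    have "B g a = 0 \<and> B g b = 0" if g: "g \<in> G" for g
    proof -
      obtain g0 g1 where gg: "g0 \<in> Ev" "g1 \<in> Od" "g = g0 + g1" by (rule decE)
      have g01: "g0 \<in> G" "g1 \<in> G" using GD(2) gg g by auto
      have "B g1 (a + b) = 0" "B g0 (a + b) = 0" using ab(3) g01 by auto
      hence "B g1 a = 0" "B g0 b = 0" using ab gg BEE BOO by (simp_all add: Badd2)
      thus ?thesis using gg ab BEE BOO by (simp add: Badd1)
    qed
    thus "a \<in> ?H" "b \<in> ?H" using aG bG by auto
  next
    fix x y assume x: "x \<in> ?H"
    show "m x y \<in> ?H"
    proof
      show "m x y \<in> G" using x GD(3) by blast
      have "B g (m x y) = 0" if g: "g \<in> G" for g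
      proof -
        have "B g (m x y) = B (m x y) g" by (rule Bsym)
        also have "\<dots> = B x (m y g)" by (rule Bassoc)
        also have "\<dots> = B (m y g) x" by (rule Bsym)
        also have "\<dots> = 0" using x GD(4)[OF g] by blast
        finally show ?thesis .
      qed
      thus "m x y \<in> ?Gp" by blast
    qed
    show "m y x \<in> ?H"
    proof
      show "m y x \<in> G" using x GD(4) by blast
      have "B g (m y x) = 0" if g: "g \<in> G" for g
      proof -
        have "B g (m y x) = B (m g y) x" by (rule Bassoc[symmetric])
        also have "\<dots> = 0" using x GD(3)[OF g] by blast
        finally show ?thesis .
      qed
      thus "m y x \<in> ?Gp" by blast
    qed
  qed
  note HD = gradedD[OF gH]
  have iso: "B h k = 0" if "h \<in> ?H" "k \<in> ?H" for h k using that by blast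
  have HN: "?H \<noteq> {0}"
  proof
    assume H0: "?H = {0}"
    have "nondeg_on B G" unfolding nondeg_on_def
    proof (intro ballI impI)
      fix x assume x: "x \<in> G" "\<forall>y\<in>G. B x y = 0"
      hence "x \<in> ?Gp" using Bsym by auto
      thus "x = 0" using x H0 by blast
    qed
    thus False using irrD G by blast
  qed
  have HE: "alg_ideal sc Ev m (?H \<inter> Ev)" unfolding alg_ideal_def
  proof (intro conjI ballI)
    show "subspace (?H \<inter> Ev)" using HD(1) subE subspace_inter by blast
    show "?H \<inter> Ev \<subseteq> Ev" by blast
  next
    fix x y assume "x \<in> ?H \<inter> Ev" "y \<in> Ev"
    thus "m x y \<in> ?H \<inter> Ev" "m y x \<in> ?H \<inter> Ev" using HD(3,4) EE by auto
  qed
  have HE0: "?H \<inter> Ev = {0}"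
  proof (rule ccontr)
    assume "?H \<inter> Ev \<noteq> {0}"
    hence "?H \<inter> Ev = Ev" using Esimple[OF HE] by blast
    hence oneH: "one \<in> ?H" using one by blast
    have "B one z = 0" for z
    proof -
      have "m one z \<in> ?H" using HD(3)[OF oneH] .
      hence "z \<in> ?H" using one(2) by simp
      thus ?thesis using iso oneH by blast
    qed
    hence "one = 0" by (rule Bnd)
    thus False using one0 by simp
  qed
  obtain h where h: "h \<in> ?H" "h \<noteq> 0" using HN HD(1) subspace_0 by blast
  obtain h0 h1 where hh: "h0 \<in> Ev" "h1 \<in> Od" "h = h0 + h1" by (rule decE)
  have h01: "h0 \<in> ?H" "h1 \<in> ?H" using HD(2)[OF hh(1,2)] hh h by auto
  have "h0 = 0" using HE0 h01 hh by blast
  hence h1n: "h1 \<noteq> 0" using h hh by simp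
  have HH: "m p q = 0" if "p \<in> ?H \<inter> Od" "q \<in> ?H \<inter> Od" for p q
  proof (rule ndE)
    show "m p q \<in> Ev" using that OOE by blast
  next
    fix z assume z: "z \<in> Od"
    have "B (m p q) z = B p (m q z)" by (rule Bassoc)
    also have "\<dots> = 0" using that HD(3) iso by blast
    finally show "B (m p q) z = 0" .
  qed
  let ?Gn = "{m p w | p w. p \<in> ?H \<inter> Od \<and> w \<in> Od}"
  have "?Gn \<subseteq> {0}"
  proof (rule gen_zero)
    show "?Gn \<subseteq> Ev" using OOE by blast
  next
    fix e g assume e: "e \<in> Ev" and g: "g \<in> ?Gn"
    then obtain p w where pw: "p \<in> ?H \<inter> Od" "w \<in> Od" "g = m p w" by blast
    have ep: "m e p \<in> ?H \<inter> Od" using pw e HD(4) EOO by blast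
    have "m e g = m (m e p) w" using pw by (simp add: assoc)
    hence 1: "m e g \<in> ?Gn" using ep pw(2) unfolding mem_Collect_eq by (intro exI[of _ "m e p"] exI[of _ w]) simp
    have we: "m w e \<in> Od" using pw e OEO by blast
    have "m g e = m p (m w e)" using pw by (simp add: assoc)
    hence 2: "m g e \<in> ?Gn" using we pw(1) unfolding mem_Collect_eq by (intro exI[of _ p] exI[of _ "m w e"]) simp
    show "m e g \<in> span ?Gn \<and> m g e \<in> span ?Gn" using span_base[OF 1] span_base[OF 2] by blast
  next
    fix g g' assume "g \<in> ?Gn" "g' \<in> ?Gn"
    then obtain p w p' w' where pw: "p \<in> ?H \<inter> Od" "w \<in> Od" "g = m p w" "p' \<in> ?H \<inter> Od" "w' \<in> Od" "g' = m p' w'" by blast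
    have "m p' w' \<in> ?H" using pw HD(3) by blast
    hence "m w (m p' w') \<in> ?H" using HD(4) by blast
    moreover have "m w (m p' w') \<in> Od" using pw OOE OEO by blast
    ultimately have "m p (m w (m p' w')) = 0" using HH pw(1) by blast
    thus "m g g' = 0" using pw by (simp add: assoc)
  qed
  hence h1O: "m h1 w = 0" if "w \<in> Od" for w using that h01 hh by blast
  have Oh1: "m w h1 = 0" if w: "w \<in> Od" for w
  proof (rule ndE)
    show "m w h1 \<in> Ev" using w hh OOE by blast
  next
    fix z assume z: "z \<in> Od"
    have "B (m w h1) z = B w (m h1 z)" by (rule Bassoc)
    thus "B (m w h1) z = 0" using h1O[OF z] by simp
  qed
  let ?Gi = "{m p q | p q. p \<in> Od \<and> q \<in> Od}"
  have GiE: "?Gi \<subseteq> Ev" using OOE by blast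
  have IE: "alg_ideal sc Ev m (span ?Gi)" unfolding alg_ideal_def
  proof (intro conjI ballI)
    show "subspace (span ?Gi)" by simp
    show "span ?Gi \<subseteq> Ev" using GiE subE span_minimal by blast
  next
    fix x y assume x: "x \<in> span ?Gi" and y: "y \<in> Ev"
    have c1: "m a b \<in> span ?Gi" if ab: "a \<in> ?Gi" "b \<in> Ev" for a b
    proof -
      obtain p q where pq: "p \<in> Od" "q \<in> Od" "a = m p q" using ab by blast
      have "m a b = m p (m q b)" using pq by (simp add: assoc)
      moreover have "m q b \<in> Od" using pq that OEO by blast
      ultimately have "m a b \<in> ?Gi" using pq by blast
      thus ?thesis by (rule span_base)
    qed
    have c2: "m b a \<in> span ?Gi" if ab: "b \<in> Ev" "a \<in> ?Gi" for a b
    proof -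
      obtain p q where pq: "p \<in> Od" "q \<in> Od" "a = m p q" using ab by blast
      have "m b a = m (m b p) q" using pq by (simp add: assoc)
      moreover have "m b p \<in> Od" using pq that EOO by blast
      ultimately have "m b a \<in> ?Gi" using pq by blast
      thus ?thesis by (rule span_base)
    qed
    show "m x y \<in> span ?Gi" using span_prod[of "span ?Gi" ?Gi Ev x y] c1 x y span_superset by blast
    show "m y x \<in> span ?Gi" using span_prod[of "span ?Gi" Ev ?Gi y x] c2 x y span_superset by blast
  qed
  have "span ?Gi \<noteq> Ev"
  proof
    assume I: "span ?Gi = Ev"
    have "B e h1 = 0" if e: "e \<in> Ev" for e
    proof -
      have es: "e \<in> span ?Gi" using I e by simp
      have "B s h1 = 0" if s: "s \<in> ?Gi" for s
      proof -
        obtain p q where pq: "p \<in> Od" "q \<in> Od" "s = m p q" using s by blast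
        have "B (m p q) h1 = B p (m q h1)" by (rule Bassoc)
        thus "B s h1 = 0" using pq Oh1 by simp
      qed
      thus ?thesis using perp_span[of ?Gi h1 e] es by blast
    qed
    hence "h1 = 0" using hh(2) ndO Bsym by metis
    thus False using h1n by simp
  qed
  hence "span ?Gi = {0}" using Esimple[OF IE] by blast
  moreover have "m x y \<in> span ?Gi" using x y by (intro span_base) blast
  ultimately show ?thesis by simp
qed

definition phi where
  "phi x = (p0 x, \<lambda>z. if z \<in> Ev then B (x - p0 x) z else 0)"

lemma dualI: "(\<lambda>z. if z \<in> Ev then B w z else 0) \<in> dual_sp sc Ev"
  unfolding dual_sp_def
proof (intro CollectI conjI ballI allI impI)
  fix x y assume "x \<in> Ev" "y \<in> Ev"
  moreover hence "x + y \<in> Ev" using subE subspace_add by blast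
  ultimately show "(if x + y \<in> Ev then B w (x + y) else 0) = (if x \<in> Ev then B w x else 0) + (if y \<in> Ev then B w y else 0)"
    by (simp add: Badd2)
next
  fix c x assume "x \<in> Ev"
  moreover hence "sc c x \<in> Ev" using subE subspace_scale by blast
  ultimately show "(if sc c x \<in> Ev then B w (sc c x) else 0) = c * (if x \<in> Ev then B w x else 0)"
    by (simp add: Bsc2)
qed simp

lemma p1: "x - p0 x \<in> Od" using p0 by blast

lemma phi_mult: "phi (m x y) = sdp_mult Ev m (phi x) (phi y)"
proof -
  define x0 x1 y0 y1 where "x0 = p0 x" "x1 = x - p0 x" "y0 = p0 y" "y1 = y - p0 y"
  have X: "x0 \<in> Ev" "x1 \<in> Od" "y0 \<in> Ev" "y1 \<in> Od" "x = x0 + x1" "y = y0 + y1"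
    unfolding x0_x1_y0_y1_def using p0 by auto
  have "m x y = m x0 y0 + (m x0 y1 + m x1 y0) + m x1 y1" using X(5,6) by (simp add: madd1 madd2 algebra_simps)
  hence mxy: "m x y = m x0 y0 + (m x0 y1 + m x1 y0)" using OOz X by simp
  have a: "m x0 y0 \<in> Ev" using X EE by blast
  have b: "m x0 y1 + m x1 y0 \<in> Od" using X EOO OEO subO subspace_add by blast
  have P0: "p0 (m x y) = m x0 y0" unfolding mxy using p0_eq[OF a b] .
  have P1: "m x y - p0 (m x y) = m x0 y1 + m x1 y0" using P0 mxy by simp
  have zx: "m z x0 \<in> Ev" "m y0 z \<in> Ev" if "z \<in> Ev" for z using that X EE by auto
  have key: "B (m x0 y1 + m x1 y0) z = B y1 (m z x0) + B x1 (m y0 z)" if z: "z \<in> Ev" for z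
  proof -
    have "B (m x0 y1) z = B z (m x0 y1)" by (rule Bsym)
    also have "\<dots> = B (m z x0) y1" by (rule Bassoc[symmetric])
    also have "\<dots> = B y1 (m z x0)" by (rule Bsym)
    finally have 1: "B (m x0 y1) z = B y1 (m z x0)" .
    have 2: "B (m x1 y0) z = B x1 (m y0 z)" by (rule Bassoc)
    show ?thesis using 1 2 by (simp add: Badd1)
  qed
  show ?thesis unfolding phi_def sdp_mult_def
    using P0 P1 key zx by (auto simp: x0_x1_y0_y1_def)
qed

lemma main_osa: "simple_alg sc Ev m \<and> sdp_superalg_iso sc m Ev Od Ev m phi"
proof
  obtain one where one: "one \<in> Ev" "\<And>y. m one y = y \<and> m y one = y" using one_ex by blast
  have one0: "one \<noteq> 0"
  proof
    assume "one = 0"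
    hence "\<forall>x\<in>Ev. x = 0" using one(2) by (metis m0r)
    thus False using EvNZ' E0 by blast
  qed
  show "simple_alg sc Ev m" unfolding simple_alg_def assoc_alg_on_def
  proof (intro conjI ballI allI impI)
    show "subspace Ev" by (rule subE)
  next
    fix x y assume "x \<in> Ev" "y \<in> Ev" thus "m x y \<in> Ev" by (rule EE)
  next
    show "bilinear_on sc Ev m" using bil unfolding bilinear_on_def by blast
  next
    fix x y z show "m (m x y) z = m x (m y z)" by (rule assoc)
  next
    show "\<exists>x\<in>Ev. \<exists>y\<in>Ev. m x y \<noteq> 0" using one one0 by metis
  next
    fix J assume "alg_ideal sc Ev m J" thus "J = {0} \<or> J = Ev" by (rule Esimple)
  qed
  show "sdp_superalg_iso sc m Ev Od Ev m phi" unfolding sdp_superalg_iso_def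
  proof (intro conjI allI)
    show "bij_betw phi UNIV (sdp_carrier sc Ev)" unfolding bij_betw_def sdp_carrier_def
    proof
      show "inj_on phi UNIV"
      proof (rule inj_onI)
        fix x y assume "phi x = phi y"
        hence e0: "p0 x = p0 y" and ef: "(\<lambda>z. if z \<in> Ev then B (x - p0 x) z else 0) = (\<lambda>z. if z \<in> Ev then B (y - p0 y) z else 0)"
          unfolding phi_def by simp_all
        have e1: "B (x - p0 x) z = B (y - p0 y) z" if z: "z \<in> Ev" for z
          using fun_cong[OF ef, of z] z by simp
        have "(x - p0 x) - (y - p0 y) = 0"
        proof (rule ndO)
          show "(x - p0 x) - (y - p0 y) \<in> Od" using p1 subO subspace_diff by blast
        next
          fix z assume "z \<in> Ev" thus "B ((x - p0 x) - (y - p0 y)) z = 0" using e1 by (simp add: Bdiff1)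
        qed
        thus "x = y" using e0 by (simp add: algebra_simps)
      qed
    next
      show "range phi = Ev \<times> dual_sp sc Ev"
      proof
        show "range phi \<subseteq> Ev \<times> dual_sp sc Ev" unfolding phi_def using p0 dualI by auto
      next
        show "Ev \<times> dual_sp sc Ev \<subseteq> range phi"
        proof
          fix p assume "p \<in> Ev \<times> dual_sp sc Ev"
          then obtain s f where sf: "p = (s, f)" "s \<in> Ev" "f \<in> dual_sp sc Ev" by blast
          have fl: "\<forall>x\<in>Ev. \<forall>y\<in>Ev. f (x + y) = f x + f y" "\<forall>c. \<forall>x\<in>Ev. f (sc c x) = c * f x"
            and fo: "\<And>x. x \<notin> Ev \<Longrightarrow> f x = 0" using sf(3) unfolding dual_sp_def by auto
          obtain w where w: "w \<in> Od" "\<forall>z\<in>Ev. B z w = f z" using rep_E[OF fl] by blast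
          have ps: "p0 (s + w) = s" using p0_eq sf w by blast
          have sw: "s + w - s = w" by (rule add_diff_cancel_left')
          have "phi (s + w) = (s, \<lambda>z. if z \<in> Ev then B w z else 0)" unfolding phi_def ps sw by (rule refl)
          also have "(\<lambda>z. if z \<in> Ev then B w z else 0) = f" using w fo Bsym by fastforce
          finally show "p \<in> range phi" using sf by (metis rangeI)
        qed
      qed
    qed
  next
    fix x y
    have d: "x + y - p0 (x + y) = (x - p0 x) + (y - p0 y)" by (simp add: p0_add)
    show "phi (x + y) = sdp_add (phi x) (phi y)"
      unfolding phi_def sdp_add_def d by (auto simp: p0_add Badd1)
  next
    fix c x
    have d: "sc c x - p0 (sc c x) = sc c (x - p0 x)" by (simp add: p0_sc scale_right_diff_distrib)
    show "phi (sc c x) = sdp_scale sc c (phi x)"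
      unfolding phi_def sdp_scale_def d by (auto simp: p0_sc Bsc1)
  next
    fix x y show "phi (m x y) = sdp_mult Ev m (phi x) (phi y)" by (rule phi_mult)
  next
    show "phi ` Ev = Ev \<times> {\<lambda>_. 0}"
    proof
      show "phi ` Ev \<subseteq> Ev \<times> {\<lambda>_. 0}" unfolding phi_def using p0_E by auto
    next
      show "Ev \<times> {\<lambda>_. 0} \<subseteq> phi ` Ev"
      proof -
        have "phi s = (s, \<lambda>_. 0)" if s: "s \<in> Ev" for s unfolding phi_def using p0_E[OF s] by auto
        thus ?thesis by force
      qed
    qed
  next
    show "phi ` Od = {0} \<times> dual_sp sc Ev"
    proof
      show "phi ` Od \<subseteq> {0} \<times> dual_sp sc Ev" unfolding phi_def using p0_O dualI by auto
    next
      show "{0} \<times> dual_sp sc Ev \<subseteq> phi ` Od"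
      proof -
        have "(0, f) \<in> phi ` Od" if f: "f \<in> dual_sp sc Ev" for f
        proof -
          have fl: "\<forall>x\<in>Ev. \<forall>y\<in>Ev. f (x + y) = f x + f y" "\<forall>c. \<forall>x\<in>Ev. f (sc c x) = c * f x"
            and fo: "\<And>x. x \<notin> Ev \<Longrightarrow> f x = 0" using f unfolding dual_sp_def by auto
          obtain w where w: "w \<in> Od" "\<forall>z\<in>Ev. B z w = f z" using rep_E[OF fl] by blast
          have "phi w = (0, \<lambda>z. if z \<in> Ev then B w z else 0)" unfolding phi_def p0_O[OF w(1)] diff_zero by (rule refl)
          also have "(\<lambda>z. if z \<in> Ev then B w z else 0) = f" using w fo Bsym by fastforce
          finally show ?thesis using w(1) by (metis imageI)
        qed
        thus ?thesis by blast
      qed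
    qed
  qed
qed

end


theorem mainTheorem18:
  fixes sc :: "'k::field_char_0 \<Rightarrow> 'a::ab_group_add \<Rightarrow> 'a"
    and m :: "'a \<Rightarrow> 'a \<Rightarrow> 'a"
    and A0 A1 :: "'a set"
    and B :: "'a \<Rightarrow> 'a \<Rightarrow> 'k"
  assumes "alg_closed TYPE('k)"
    and "assoc_superalg sc m A0 A1"
    and "odd_symmetric sc m A0 A1 B"
    and "B_irreducible sc m A0 A1 B"
    and "\<not> simple_superalg sc m A0 A1"
    and "semisimple_alg sc A0 m"
  shows "\<exists>S mS \<phi>. simple_alg sc S mS \<and> sdp_superalg_iso sc m A0 A1 S mS \<phi>"
proof -
  note AS = assms(2)[unfolded assoc_superalg_def]
  note OS = assms(3)[unfolded odd_symmetric_def]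
  have fd: "fin_dim_vs sc" using AS by blast
  hence vs: "vector_space sc" and "\<exists>G. finite G \<and> module.span sc G = UNIV" unfolding fin_dim_vs_def by auto
  then obtain G where G: "finite G" "module.span sc G = UNIV" by blast
  interpret vs: vector_space sc by (rule vs)
  obtain Bas where Bas: "Bas \<subseteq> G" "vs.independent Bas" "G \<subseteq> vs.span Bas"
    by (rule vs.maximal_independent_subset)
  have fB: "finite Bas" using Bas(1) G(1) finite_subset by blast
  have sB: "vs.span Bas = UNIV"
  proof -
    have "vs.span G \<subseteq> vs.span Bas" using Bas(3) vs.span_minimal vs.subspace_span by blast
    thus ?thesis using G(2) by auto
  qed
  have fdvs: "finite_dimensional_vector_space sc Bas"
    unfolding finite_dimensional_vector_space_def finite_dimensional_vector_space_axioms_def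
    using vs fB Bas(2) sB by blast
  have sqz: "J = {0}" if J: "alg_ideal sc A0 m J" and z: "\<And>x y. x \<in> J \<Longrightarrow> y \<in> J \<Longrightarrow> m x y = 0" for J
  proof -
    have "prods m J 1 \<subseteq> {0}" using z by auto
    hence "nilpotent_set m J" unfolding nilpotent_set_def by blast
    thus ?thesis using J assms(6) unfolding semisimple_alg_def by blast
  qed
  have "osa2 sc Bas m A0 A1 B"
    unfolding osa2_def osa2_axioms_def osa_def osa_axioms_def
  proof (intro conjI fdvs allI impI)
    show "bilinear_on sc UNIV m" using AS by blast
    show "B_irreducible sc m A0 A1 B" by (rule assms(4))
    show "\<not> simple_superalg sc m A0 A1" by (rule assms(5))
  qed (use AS OS sqz in auto)
  then interpret osa2 sc Bas m A0 A1 B .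
  show ?thesis using main_osa by blast
qed

end
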